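(* Let $\mathbb{K}$ be an algebraically closed field of characteristic zero, $\mathcal{C}\subset\mathbb{K}^2$ an affine irreducible plane curve, $A=(a,b)\in\mathbb{K}^2$, $d\in\mathbb{K}\setminus\{0\}$, and assume that $\mathcal{C}_0\neq\emptyset$ and that $\mathcal{C}$ is not a circle centered at $A$. Then $\mathfrak{C}(\mathcal{C},A,d)$ is irreducible and special if and only if $\mathcal{C}$ is a line passing through $A$.
   Context: For $\mathcal{C}$ defined by an irreducible polynomial $f(y_1,y_2)$: $\mathfrak{B}(\mathcal{C},A,d)\subset\mathbb{K}^2\times\mathbb{K}^2\times\mathbb{K}$ is the set of $(\bar x,\bar y,w)$ with $f(y_1,y_2)=0$, $(x_1-y_1)^2+(x_2-y_2)^2=d^2$, $(y_2-b)(x_1-y_1)-(y_1-a)(x_2-y_2)=0$, $w((y_1-a)^2+(y_2-b)^2)=1$; $\pi_1,\pi_2$ are the projections $(\bar x,\bar y,w)\mapsto\bar x$, $\mapsto\bar y$; the conchoid $\mathfrak{C}(\mathcal{C},A,d)$ is the Zariski closure of $\pi_1(\mathfrak{B}(\mathcal{C},A,d))$. $\mathcal{C}_0=\{(p_1,p_2)\in\mathcal{C}:(p_1-a)^2+(p_2-b)^2\neq0\}$. An irreducible component $\mathcal{M}$ of $\mathfrak{C}(\mathcal{C},A,d)$ is simple if there is a non-empty Zariski dense $\Omega\subset\mathcal{M}$ with $\mathrm{Card}(\pi_2(\pi_1^{-1}(Q)))=1$ for all $Q\in\Omega$; otherwise special. A circle centered at $A$ of radius $r$ is $(y_1-a)^2+(y_2-b)^2=r^2$.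 *)

theory Defs
  imports "HOL-Computational_Algebra.Polynomial" "HOL-Computational_Algebra.Polynomial_Factorial"
begin

definition algebraically_closed :: "'a::field itself \<Rightarrow> bool" where
  "algebraically_closed _ \<longleftrightarrow> (\<forall>p :: 'a poly. degree p > 0 \<longrightarrow> (\<exists>x. poly p x = 0))"

text \<open>Bivariate polynomials in K[y1,y2] are represented as K[y1][y2] (type 'a poly poly):
  the outer variable is y2, the coefficients are polynomials in y1.\<close>
definition eval2 :: "'a::comm_semiring_1 poly poly \<Rightarrow> 'a \<times> 'a \<Rightarrow> 'a" where
  "eval2 f p = poly (poly f [:snd p:]) (fst p)"

definition zero_set :: "'a::comm_semiring_1 poly poly \<Rightarrow> ('a \<times> 'a) set" where
  "zero_set f = {p. eval2 f p = 0}"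

definition zariski_closed :: "('a::comm_semiring_1 \<times> 'a) set \<Rightarrow> bool" where
  "zariski_closed S \<longleftrightarrow> (\<exists>P. S = {p. \<forall>g\<in>P. eval2 g p = 0})"

definition zclosure :: "('a::comm_semiring_1 \<times> 'a) set \<Rightarrow> ('a \<times> 'a) set" where
  "zclosure S = \<Inter>{T. zariski_closed T \<and> S \<subseteq> T}"

definition zariski_irreducible :: "('a::comm_semiring_1 \<times> 'a) set \<Rightarrow> bool" where
  "zariski_irreducible M \<longleftrightarrow> zariski_closed M \<and> M \<noteq> {} \<and>
     (\<forall>T1 T2. zariski_closed T1 \<and> zariski_closed T2 \<and> M \<subseteq> T1 \<union> T2 \<longrightarrow> M \<subseteq> T1 \<or> M \<subseteq> T2)"

definition irreducible_component :: "('a::comm_semiring_1 \<times> 'a) set \<Rightarrow> ('a \<times> 'a) set \<Rightarrow> bool" where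
  "irreducible_component X M \<longleftrightarrow> zariski_irreducible M \<and> M \<subseteq> X \<and>
     (\<forall>N. zariski_irreducible N \<and> M \<subseteq> N \<and> N \<subseteq> X \<longrightarrow> N = M)"

definition conchoid_B :: "'a::field poly poly \<Rightarrow> 'a \<Rightarrow> 'a \<Rightarrow> 'a \<Rightarrow> (('a \<times> 'a) \<times> ('a \<times> 'a) \<times> 'a) set" where
  "conchoid_B f a b d = {((x1,x2),(y1,y2),w).
      eval2 f (y1,y2) = 0 \<and>
      (x1 - y1)^2 + (x2 - y2)^2 = d^2 \<and>
      (y2 - b) * (x1 - y1) - (y1 - a) * (x2 - y2) = 0 \<and>
      w * ((y1 - a)^2 + (y2 - b)^2) = 1}"

definition conchoid :: "'a::field poly poly \<Rightarrow> 'a \<Rightarrow> 'a \<Rightarrow> 'a \<Rightarrow> ('a \<times> 'a) set" where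
  "conchoid f a b d = zclosure ((\<lambda>(x,y,w). x) ` conchoid_B f a b d)"

definition conchoid_fiber :: "'a::field poly poly \<Rightarrow> 'a \<Rightarrow> 'a \<Rightarrow> 'a \<Rightarrow> 'a \<times> 'a \<Rightarrow> ('a \<times> 'a) set" where
  "conchoid_fiber f a b d Q = (\<lambda>(x,y,w). y) ` {z \<in> conchoid_B f a b d. fst z = Q}"

definition simple_component :: "'a::field poly poly \<Rightarrow> 'a \<Rightarrow> 'a \<Rightarrow> 'a \<Rightarrow> ('a \<times> 'a) set \<Rightarrow> bool" where
  "simple_component f a b d M \<longleftrightarrow> irreducible_component (conchoid f a b d) M \<and>
     (\<exists>\<Omega>. \<Omega> \<noteq> {} \<and> \<Omega> \<subseteq> M \<and> zclosure \<Omega> = M \<and>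
          (\<forall>Q\<in>\<Omega>. card (conchoid_fiber f a b d Q) = 1))"

definition special_component :: "'a::field poly poly \<Rightarrow> 'a \<Rightarrow> 'a \<Rightarrow> 'a \<Rightarrow> ('a \<times> 'a) set \<Rightarrow> bool" where
  "special_component f a b d M \<longleftrightarrow> irreducible_component (conchoid f a b d) M \<and>
     \<not> simple_component f a b d M"

definition is_line :: "('a::field \<times> 'a) set \<Rightarrow> bool" where
  "is_line C \<longleftrightarrow> (\<exists>\<alpha> \<beta> \<gamma>. (\<alpha>, \<beta>) \<noteq> (0, 0) \<and> C = {(y1, y2). \<alpha> * y1 + \<beta> * y2 + \<gamma> = 0})"

definition is_circle_centered :: "('a::field \<times> 'a) set \<Rightarrow> 'a \<times> 'a \<Rightarrow> bool" where
  "is_circle_centered C A \<longleftrightarrow> (\<exists>r. C = {(y1, y2). (y1 - fst A)^2 + (y2 - snd A)^2 = r^2})"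

end

theory Submission
  imports Defs
begin


lemma eval2_add[simp]: "eval2 (p + q) x = eval2 p x + eval2 q x"
  by (simp add: eval2_def)
lemma eval2_mult[simp]: "eval2 (p * q) x = eval2 p x * eval2 q x"
  by (simp add: eval2_def)
lemma eval2_diff[simp]: "eval2 (p - q) x = eval2 p x - eval2 (q::'a::comm_ring_1 poly poly) x"
  by (simp add: eval2_def)
lemma eval2_minus[simp]: "eval2 (- p) x = - eval2 (p::'a::comm_ring_1 poly poly) x"
  by (simp add: eval2_def)
lemma eval2_0[simp]: "eval2 0 x = 0" by (simp add: eval2_def)
lemma eval2_1[simp]: "eval2 1 x = 1" by (simp add: eval2_def)
lemma eval2_const[simp]: "eval2 [:[:c:]:] x = c" by (simp add: eval2_def)
lemma eval2_X1[simp]: "eval2 [:[:0,1:]:] x = fst x" by (simp add: eval2_def)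
lemma eval2_X2[simp]: "eval2 [:0,1:] x = snd x" by (simp add: eval2_def)
lemma eval2_pCons: "eval2 (pCons c g) (y1,y2) = poly c y1 + y2 * eval2 g (y1,y2)"
  by (simp add: eval2_def)
lemma eval2_pCons': "eval2 (pCons c g) x = poly c (fst x) + snd x * eval2 g x"
  by (simp add: eval2_def)

definition pX1 :: "'a::comm_semiring_1 poly poly" where "pX1 = [:[:0,1:]:]"
definition pX2 :: "'a::comm_semiring_1 poly poly" where "pX2 = [:0,1:]"
definition pC :: "'a::comm_semiring_1 \<Rightarrow> 'a poly poly" where "pC c = [:[:c:]:]"
lemma eval2_pX1[simp]: "eval2 pX1 x = fst x" by (simp add: pX1_def)
lemma eval2_pX2[simp]: "eval2 pX2 x = snd x" by (simp add: pX2_def)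
lemma eval2_pC[simp]: "eval2 (pC c) x = c" by (simp add: pC_def)

lemma eval2_power[simp]: "eval2 (p ^ n) x = eval2 p x ^ n"
  by (induction n) auto

definition Vset :: "'a::comm_semiring_1 poly poly set \<Rightarrow> ('a \<times> 'a) set" where
  "Vset P = {p. \<forall>g\<in>P. eval2 g p = 0}"

lemma closed_V: "zariski_closed (Vset P)" by (auto simp: zariski_closed_def Vset_def)

lemma closed_union:
  fixes S T :: "('a::idom \<times> 'a) set"
  assumes "zariski_closed S" "zariski_closed T" shows "zariski_closed (S \<union> T)"
proof -
  from assms obtain P Q where S: "S = Vset P" and T: "T = Vset Q"
    by (auto simp: zariski_closed_def Vset_def)
  have "S \<union> T = Vset {g * h | g h. g \<in> P \<and> h \<in> Q}"
  proof
    show "S \<union> T \<subseteq> Vset {g * h | g h. g \<in> P \<and> h \<in> Q}"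
    proof
      fix p assume p: "p \<in> S \<union> T"
      show "p \<in> Vset {g * h | g h. g \<in> P \<and> h \<in> Q}"
        unfolding Vset_def
      proof (intro CollectI ballI)
        fix z assume "z \<in> {g * h | g h. g \<in> P \<and> h \<in> Q}"
        then obtain g h where z: "z = g * h" "g \<in> P" "h \<in> Q" by blast
        from p have "eval2 g p = 0 \<or> eval2 h p = 0" unfolding S T Vset_def using z by blast
        then show "eval2 z p = 0" using z by auto
      qed
    qed
    show "Vset {g * h | g h. g \<in> P \<and> h \<in> Q} \<subseteq> S \<union> T"
    proof
      fix p assume p: "p \<in> Vset {g * h | g h. g \<in> P \<and> h \<in> Q}"
      show "p \<in> S \<union> T"
      proof (cases "p \<in> S")
        case False
        then obtain g where g: "g \<in> P" "eval2 g p \<noteq> 0" unfolding S Vset_def by auto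
        have "\<forall>h\<in>Q. eval2 h p = 0"
        proof
          fix h assume "h \<in> Q"
          then have "eval2 (g * h) p = 0" using p g unfolding Vset_def by blast
          then show "eval2 h p = 0" using g by simp
        qed
        then show ?thesis unfolding T Vset_def by auto
      qed auto
    qed
  qed
  then show ?thesis by (simp add: closed_V)
qed

lemma closed_Inter:
  fixes F :: "('a::comm_semiring_1 \<times> 'a) set set"
  assumes "\<forall>S\<in>F. zariski_closed S" shows "zariski_closed (\<Inter>F)"
proof -
  have "\<forall>S\<in>F. \<exists>P. S = Vset P" using assms by (auto simp: zariski_closed_def Vset_def)
  then have PP: "\<forall>S\<in>F. S = Vset (SOME P. S = Vset P)" by (meson someI_ex)
  define PP :: "('a \<times> 'a) set \<Rightarrow> 'a poly poly set" where "PP S = (SOME P. S = Vset P)" for S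
  have PP: "\<forall>S\<in>F. S = Vset (PP S)" using PP unfolding PP_def .
  have "\<Inter>F = Vset (\<Union>S\<in>F. PP S)"
  proof (intro equalityI subsetI)
    fix p assume p: "p \<in> \<Inter>F"
    show "p \<in> Vset (\<Union>S\<in>F. PP S)" unfolding Vset_def
    proof (intro CollectI ballI)
      fix g assume "g \<in> (\<Union>S\<in>F. PP S)"
      then obtain S where S: "S \<in> F" "g \<in> PP S" by (rule UN_E)
      have "p \<in> Vset (PP S)" using PP S(1) p by auto
      then show "eval2 g p = 0" using S(2) unfolding Vset_def by auto
    qed
  next
    fix p assume p: "p \<in> Vset (\<Union>S\<in>F. PP S)"
    show "p \<in> \<Inter>F"
    proof (rule InterI)
      fix S assume S: "S \<in> F"
      have "p \<in> Vset (PP S)" using p S unfolding Vset_def by auto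
      then show "p \<in> S" using PP S by auto
    qed
  qed
  then show ?thesis by (simp add: closed_V)
qed

lemma closed_zclosure: "zariski_closed (zclosure S)"
  unfolding zclosure_def by (rule closed_Inter) auto

lemma zclosure_sub: "S \<subseteq> zclosure S" unfolding zclosure_def by auto

lemma zclosure_min: "zariski_closed T \<Longrightarrow> S \<subseteq> T \<Longrightarrow> zclosure S \<subseteq> T"
  unfolding zclosure_def by auto

lemma zclosure_closed: "zariski_closed T \<Longrightarrow> zclosure T = T"
  using zclosure_sub zclosure_min by blast

lemma closed_empty: "zariski_closed ({} :: ('a::comm_semiring_1 \<times> 'a) set)"
proof -
  have "({} :: ('a \<times> 'a) set) = Vset {1}" by (auto simp: Vset_def)
  then show ?thesis by (metis closed_V)
qed

lemma zclosure_empty: "zclosure ({} :: ('a::comm_semiring_1 \<times> 'a) set) = {}"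
  by (simp add: closed_empty zclosure_closed)

lemma closed_point: "zariski_closed {(u::'a::comm_ring_1, v)}"
proof -
  have "{(u, v)} = Vset {pX1 - pC u, pX2 - pC v}"
  proof -
    have "p \<in> Vset {pX1 - pC u, pX2 - pC v} \<longleftrightarrow> fst p - u = 0 \<and> snd p - v = 0" for p
      unfolding Vset_def by simp
    then show ?thesis by (auto simp: prod_eq_iff)
  qed
  then show ?thesis by (metis closed_V)
qed

lemma closed_zero_set: "zariski_closed (zero_set f)"
proof -
  have "zero_set f = Vset {f}" by (auto simp: Vset_def zero_set_def)
  then show ?thesis by (simp add: closed_V)
qed

lemma sqrt_exists:
  assumes "algebraically_closed TYPE('a::field)"
  shows "\<exists>s::'a. s^2 = c"
proof -
  have "degree [:-c, 0, 1:] > 0" by simp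
  then obtain s where "poly [:-c, 0, 1:] s = 0"
    using assms unfolding algebraically_closed_def by blast
  then have "s^2 = c" by (simp add: power2_eq_square algebra_simps)
  then show ?thesis by blast
qed

lemma sq_eq_sq: "(z::'a::field)^2 = w^2 \<Longrightarrow> z = w \<or> z = - w"
  by (metis power2_eq_iff)

lemma eval2_line:
  fixes f :: "'a::field poly poly"
  shows "\<exists>h. \<forall>t. eval2 f (p1 + t * v1, p2 + t * v2) = poly h t"
proof -
  define M where "M g = map_poly (\<lambda>c. pcompose c [:p1, v1:]) g" for g :: "'a poly poly"
  have M: "M (pCons c g) = pCons (pcompose c [:p1, v1:]) (M g)" for c g
    unfolding M_def by (rule map_poly_pCons) simp
  have "eval2 f (p1 + t * v1, p2 + t * v2) = poly (poly (M f) [:p2, v2:]) t" for t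
  proof (induction f rule: pCons_induct)
    case 0 then show ?case by (simp add: M_def)
  next
    case (pCons c g)
    have "eval2 (pCons c g) (p1 + t * v1, p2 + t * v2) = poly c (p1 + t * v1) + (p2 + t * v2) * eval2 g (p1 + t * v1, p2 + t * v2)"
      by (rule eval2_pCons)
    also have "\<dots> = poly (poly (M (pCons c g)) [:p2, v2:]) t"
      unfolding M pCons.IH by (simp add: poly_pcompose algebra_simps)
    finally show ?case .
  qed
  then show ?thesis by blast
qed




definition NN :: "'a::field \<Rightarrow> 'a \<Rightarrow> 'a \<times> 'a \<Rightarrow> 'a" where
  "NN a b x = (fst x - a)^2 + (snd x - b)^2"

definition YY :: "'a::field \<Rightarrow> 'a \<Rightarrow> 'a \<Rightarrow> 'a \<times> 'a \<Rightarrow> 'a \<Rightarrow> 'a \<times> 'a" where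
  "YY a b d x \<tau> = (a + (fst x - a) * (1 + d / \<tau>), b + (snd x - b) * (1 + d / \<tau>))"

definition good :: "'a::field \<Rightarrow> 'a \<Rightarrow> ('a \<times> 'a \<Rightarrow> 'a \<Rightarrow> 'a) \<Rightarrow> bool" where
  "good a b F \<longleftrightarrow> (\<exists>P Q. \<forall>x \<tau>. \<tau> \<noteq> 0 \<longrightarrow> \<tau>^2 = NN a b x \<longrightarrow> F x \<tau> = eval2 P x + \<tau> * eval2 Q x)"

lemma good_cong: "good a b F \<Longrightarrow> (\<And>x \<tau>. \<tau> \<noteq> 0 \<Longrightarrow> F x \<tau> = G x \<tau>) \<Longrightarrow> good a b G"
  unfolding good_def by metis

lemma good_poly: "good a b (\<lambda>x \<tau>. eval2 p x)"
  unfolding good_def by (rule exI[of _ p], rule exI[of _ 0]) simp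

lemma good_tau: "good a b (\<lambda>x \<tau>. \<tau>)"
  unfolding good_def by (rule exI[of _ 0], rule exI[of _ 1]) simp

lemma good_add: "good a b F \<Longrightarrow> good a b G \<Longrightarrow> good a b (\<lambda>x \<tau>. F x \<tau> + G x \<tau>)"
  unfolding good_def
proof (elim exE)
  fix P1 Q1 P2 Q2
  assume 1: "\<forall>x \<tau>. \<tau> \<noteq> 0 \<longrightarrow> \<tau>^2 = NN a b x \<longrightarrow> F x \<tau> = eval2 P1 x + \<tau> * eval2 Q1 x"
     and 2: "\<forall>x \<tau>. \<tau> \<noteq> 0 \<longrightarrow> \<tau>^2 = NN a b x \<longrightarrow> G x \<tau> = eval2 P2 x + \<tau> * eval2 Q2 x"
  show "\<exists>P Q. \<forall>x \<tau>. \<tau> \<noteq> 0 \<longrightarrow> \<tau>^2 = NN a b x \<longrightarrow> F x \<tau> + G x \<tau> = eval2 P x + \<tau> * eval2 Q x"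
    by (rule exI[of _ "P1 + P2"], rule exI[of _ "Q1 + Q2"]) (simp add: 1 2 algebra_simps)
qed

definition Npoly :: "'a::field \<Rightarrow> 'a \<Rightarrow> 'a poly poly" where
  "Npoly a b = (pX1 - pC a)^2 + (pX2 - pC b)^2"

lemma eval2_Npoly[simp]: "eval2 (Npoly a b) x = NN a b x"
  by (simp add: Npoly_def NN_def)

lemma good_mult: "good a b F \<Longrightarrow> good a b G \<Longrightarrow> good a b (\<lambda>x \<tau>. F x \<tau> * G x \<tau>)"
  unfolding good_def
proof (elim exE)
  fix P1 Q1 P2 Q2
  assume 1: "\<forall>x \<tau>. \<tau> \<noteq> 0 \<longrightarrow> \<tau>^2 = NN a b x \<longrightarrow> F x \<tau> = eval2 P1 x + \<tau> * eval2 Q1 x"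
     and 2: "\<forall>x \<tau>. \<tau> \<noteq> 0 \<longrightarrow> \<tau>^2 = NN a b x \<longrightarrow> G x \<tau> = eval2 P2 x + \<tau> * eval2 Q2 x"
  show "\<exists>P Q. \<forall>x \<tau>. \<tau> \<noteq> 0 \<longrightarrow> \<tau>^2 = NN a b x \<longrightarrow> F x \<tau> * G x \<tau> = eval2 P x + \<tau> * eval2 Q x"
  proof (rule exI[of _ "P1 * P2 + Npoly a b * Q1 * Q2"], rule exI[of _ "P1 * Q2 + Q1 * P2"], intro allI impI)
    fix x \<tau> assume t: "(\<tau>::'a) \<noteq> 0" "\<tau>^2 = NN a b x"
    have "F x \<tau> = eval2 P1 x + \<tau> * eval2 Q1 x" using 1 t by blast
    moreover have "G x \<tau> = eval2 P2 x + \<tau> * eval2 Q2 x" using 2 t by blast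
    ultimately have "F x \<tau> * G x \<tau> = (eval2 P1 x + \<tau> * eval2 Q1 x) * (eval2 P2 x + \<tau> * eval2 Q2 x)"
      by simp
    also have "\<dots> = eval2 P1 x * eval2 P2 x + \<tau>^2 * eval2 Q1 x * eval2 Q2 x
        + \<tau> * (eval2 P1 x * eval2 Q2 x + eval2 Q1 x * eval2 P2 x)"
      by (simp add: algebra_simps power2_eq_square)
    finally show "F x \<tau> * G x \<tau> = eval2 (P1 * P2 + Npoly a b * Q1 * Q2) x + \<tau> * eval2 (P1 * Q2 + Q1 * P2) x"
      using t by simp
  qed
qed

lemma good_tau_pow: "good a b F \<Longrightarrow> good a b (\<lambda>x \<tau>. \<tau>^k * F x \<tau>)"
proof (induction k)
  case 0 then show ?case by simp
next
  case (Suc k)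
  have "good a b (\<lambda>x \<tau>. \<tau> * (\<tau>^k * F x \<tau>))"
    by (rule good_mult[OF good_tau Suc.IH[OF Suc.prems]])
  then show ?case by (simp add: mult.assoc)
qed

lemma good_Y1: "good a b (\<lambda>x \<tau>. \<tau> * fst (YY a b d x \<tau>))"
proof -
  have "good a b (\<lambda>x \<tau>. \<tau> * a + (fst x - a) * (\<tau> + d))"
    using good_add[OF good_mult[OF good_tau good_poly[of a b "pC a"]]
        good_mult[OF good_poly[of a b "pX1 - pC a"] good_add[OF good_tau good_poly[of a b "pC d"]]]]
    by simp
  then show ?thesis
    by (rule good_cong) (simp add: YY_def field_simps)
qed

lemma good_Y2: "good a b (\<lambda>x \<tau>. \<tau> * snd (YY a b d x \<tau>))"
proof -
  have "good a b (\<lambda>x \<tau>. \<tau> * b + (snd x - b) * (\<tau> + d))"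
    using good_add[OF good_mult[OF good_tau good_poly[of a b "pC b"]]
        good_mult[OF good_poly[of a b "pX2 - pC b"] good_add[OF good_tau good_poly[of a b "pC d"]]]]
    by simp
  then show ?thesis
    by (rule good_cong) (simp add: YY_def field_simps)
qed

lemma good_inner: "\<exists>m. good a b (\<lambda>x \<tau>. \<tau>^m * poly c (fst (YY a b d x \<tau>)))"
proof (induction c rule: pCons_induct)
  case 0 then show ?case using good_poly[of a b 0] by (intro exI[of _ 0]) simp
next
  case (pCons c0 c)
  then obtain m where m: "good a b (\<lambda>x \<tau>. \<tau>^m * poly c (fst (YY a b d x \<tau>)))" by blast
  have g1: "good a b (\<lambda>x \<tau>. \<tau>^(Suc m) * c0)"
    using good_tau_pow[OF good_poly[of a b "pC c0"], of "Suc m"] by simp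
  have g2: "good a b (\<lambda>x \<tau>. (\<tau> * fst (YY a b d x \<tau>)) * (\<tau>^m * poly c (fst (YY a b d x \<tau>))))"
    by (rule good_mult[OF good_Y1 m])
  have "good a b (\<lambda>x \<tau>. \<tau>^(Suc m) * poly (pCons c0 c) (fst (YY a b d x \<tau>)))"
    using good_add[OF g1 g2] by (rule good_cong) (simp add: algebra_simps)
  then show ?case by blast
qed

lemma good_main: "\<exists>m. good a b (\<lambda>x \<tau>. \<tau>^m * eval2 g (YY a b d x \<tau>))"
proof (induction g rule: pCons_induct)
  case 0 then show ?case using good_poly[of a b 0] by (intro exI[of _ 0]) simp
next
  case (pCons c g)
  then obtain m where m: "good a b (\<lambda>x \<tau>. \<tau>^m * eval2 g (YY a b d x \<tau>))" by blast
  obtain k where k: "good a b (\<lambda>x \<tau>. \<tau>^k * poly c (fst (YY a b d x \<tau>)))"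
    using good_inner by blast
  have g1: "good a b (\<lambda>x \<tau>. \<tau>^(Suc m) * (\<tau>^k * poly c (fst (YY a b d x \<tau>))))"
    by (rule good_tau_pow[OF k])
  have g2: "good a b (\<lambda>x \<tau>. \<tau>^k * ((\<tau> * snd (YY a b d x \<tau>)) * (\<tau>^m * eval2 g (YY a b d x \<tau>))))"
    by (rule good_tau_pow[OF good_mult[OF good_Y2 m]])
  have "good a b (\<lambda>x \<tau>. \<tau>^(Suc m + k) * eval2 (pCons c g) (YY a b d x \<tau>))"
    using good_add[OF g1 g2]
    by (rule good_cong) (simp add: eval2_pCons' algebra_simps power_add)
  then show ?case by blast
qed




definition lpoly :: "'a::field \<Rightarrow> 'a \<Rightarrow> 'a \<Rightarrow> 'a poly poly" where
  "lpoly \<alpha> \<beta> \<gamma> = [:[:\<gamma>, \<alpha>:], [:\<beta>:]:]"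

lemma eval2_lpoly[simp]: "eval2 (lpoly \<alpha> \<beta> \<gamma>) p = \<alpha> * fst p + \<beta> * snd p + \<gamma>"
  by (simp add: lpoly_def eval2_def algebra_simps)

lemma eval2_fix1: "eval2 f (x1, y2) = poly (map_poly (\<lambda>c. poly c x1) f) y2"
proof (induction f rule: pCons_induct)
  case 0 then show ?case by simp
next
  case (pCons c g)
  have "map_poly (\<lambda>c. poly c x1) (pCons c g) = pCons (poly c x1) (map_poly (\<lambda>c. poly c x1) g)"
    by (rule map_poly_pCons) simp
  then show ?case using pCons.IH by (simp add: eval2_pCons)
qed

lemma unit_eval2_nonzero:
  fixes u :: "'a::field poly poly"
  assumes "u dvd 1" shows "eval2 u p \<noteq> 0"
proof -
  from assms obtain u' where "1 = u * u'" by (auto elim: dvdE)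
  then have "eval2 u p * eval2 u' p = 1" by (metis eval2_1 eval2_mult)
  then show ?thesis by auto
qed

lemma const_pow: "[:c:] ^ k = [:(c::'a::comm_semiring_1) ^ k:]"
  by (induction k) (simp_all add: algebra_simps)

lemma line_dvd:
  fixes f :: "'a::field_char_0 poly poly"
  assumes ab: "(\<alpha>, \<beta>) \<noteq> (0, 0)"
    and van: "\<And>y1 y2. \<alpha> * y1 + \<beta> * y2 + \<gamma> = 0 \<Longrightarrow> eval2 f (y1, y2) = 0"
  shows "lpoly \<alpha> \<beta> \<gamma> dvd f"
proof (cases "\<beta> = 0")
  case False
  define l where "l = lpoly \<alpha> \<beta> \<gamma>"
  have l0: "l \<noteq> 0" and dl: "degree l = 1" and cl: "coeff l 1 = [:\<beta>:]"
    using False by (auto simp: l_def lpoly_def)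
  obtain q r where qr: "pseudo_divmod f l = (q, r)" by fastforce
  define k where "k = Suc (degree f) - degree l"
  have eq: "smult ([:\<beta>:] ^ k) f = l * q + r"
    using pseudo_divmod(1)[OF l0 qr] dl cl by (simp add: k_def)
  have "r = 0 \<or> degree r < 1" using pseudo_divmod(2)[OF l0 qr] dl by simp
  then have "degree r = 0" by auto
  then have rc: "r = [:coeff r 0:]" by (metis degree_eq_zeroE coeff_pCons_0)
  have "poly (coeff r 0) y1 = 0" for y1
  proof -
    define y2 where "y2 = - (\<alpha> * y1 + \<gamma>) / \<beta>"
    have on: "\<alpha> * y1 + \<beta> * y2 + \<gamma> = 0" using False by (simp add: y2_def field_simps)
    have "eval2 (smult ([:\<beta>:] ^ k) f) (y1, y2) = eval2 (l * q + r) (y1, y2)" using eq by simp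
    moreover have "eval2 (smult ([:\<beta>:] ^ k) f) (y1, y2) = poly ([:\<beta>:] ^ k) y1 * eval2 f (y1, y2)"
      by (simp add: eval2_def)
    moreover have "eval2 l (y1, y2) = 0" using on by (simp add: l_def)
    moreover have "eval2 r (y1, y2) = poly (coeff r 0) y1"
      by (subst rc) (simp add: eval2_def)
    ultimately show ?thesis using van[OF on] by simp
  qed
  then have "coeff r 0 = 0" using poly_all_0_iff_0 by blast
  then have "r = 0" using rc by simp
  then have "smult [:\<beta> ^ k:] f = l * q" using eq by (simp add: const_pow)
  then have "smult [:1 / \<beta> ^ k:] (smult [:\<beta> ^ k:] f) = l * smult [:1 / \<beta> ^ k:] q" by simp
  moreover have "smult [:1 / \<beta> ^ k:] (smult [:\<beta> ^ k:] f) = f" using False by (simp add: one_pCons[symmetric])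
  ultimately have "f = l * smult [:1 / \<beta> ^ k:] q" by simp
  then show ?thesis unfolding l_def by (metis dvd_triv_left)
next
  case True
  then have a0: "\<alpha> \<noteq> 0" using ab by simp
  define x1 where "x1 = - \<gamma> / \<alpha>"
  have "eval2 f (x1, y2) = 0" for y2
    by (rule van) (use True a0 in \<open>simp add: x1_def\<close>)
  then have "map_poly (\<lambda>c. poly c x1) f = 0"
    using poly_all_0_iff_0 eval2_fix1 by metis
  then have "poly (coeff f n) x1 = 0" for n
    by (metis coeff_0 coeff_map_poly poly_0)
  then have "[:-x1, 1:] dvd coeff f n" for n using poly_eq_0_iff_dvd by blast
  moreover have "[:\<gamma>, \<alpha>:] = smult \<alpha> [:-x1, 1:]" using a0 by (simp add: x1_def)
  ultimately have "[:\<gamma>, \<alpha>:] dvd coeff f n" for n using a0 by (metis smult_dvd)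
  then have "[:[:\<gamma>, \<alpha>:]:] dvd f" by (simp add: const_poly_dvd_iff)
  then show ?thesis using True by (simp add: lpoly_def)
qed

lemma line_factor:
  fixes f :: "'a::field_char_0 poly poly"
  assumes irr: "irreducible f" and ab: "(\<alpha>, \<beta>) \<noteq> (0, 0)"
    and van: "\<And>y1 y2. \<alpha> * y1 + \<beta> * y2 + \<gamma> = 0 \<Longrightarrow> eval2 f (y1, y2) = 0"
  shows "zero_set f = {(y1, y2). \<alpha> * y1 + \<beta> * y2 + \<gamma> = 0}"
proof -
  obtain q where fq: "f = lpoly \<alpha> \<beta> \<gamma> * q" using line_dvd[OF ab van] by (auto elim: dvdE)
  obtain p0 where p0: "eval2 (lpoly \<alpha> \<beta> \<gamma>) p0 = 0"
  proof (cases "\<beta> = 0")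
    case True
    then have "\<alpha> \<noteq> 0" using ab by simp
    then show ?thesis using True by (intro that[of "(- \<gamma> / \<alpha>, 0)"]) simp
  next
    case False
    then show ?thesis by (intro that[of "(0, - \<gamma> / \<beta>)"]) simp
  qed
  have "\<not> lpoly \<alpha> \<beta> \<gamma> dvd 1" using p0 unit_eval2_nonzero by blast
  then have qu: "q dvd 1" using irreducibleD[OF irr fq] by blast
  show ?thesis
    using unit_eval2_nonzero[OF qu] by (auto simp: zero_set_def fq)
qed




lemma B_struct:
  assumes "((x1,x2),(y1,y2),w) \<in> conchoid_B f a b d"
  shows "eval2 f (y1,y2) = 0" "(y1-a)^2+(y2-b)^2 \<noteq> (0::'a::field)"
    "\<exists>lam. x1 - a = (1+lam)*(y1-a) \<and> x2 - b = (1+lam)*(y2-b) \<and> lam^2 * ((y1-a)^2+(y2-b)^2) = d^2"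
proof -
  note B = assms[unfolded conchoid_B_def, simplified]
  show "eval2 f (y1,y2) = 0" using B by simp
  define n where "n = (y1-a)^2+(y2-b)^2"
  have wn: "w * n = 1" using B by (simp add: n_def)
  then show n0: "(y1-a)^2+(y2-b)^2 \<noteq> 0" by (auto simp: n_def)
  then have n0': "n \<noteq> 0" by (simp add: n_def)
  have det: "(y2 - b) * (x1 - y1) - (y1 - a) * (x2 - y2) = 0" and dd: "(x1 - y1)^2 + (x2 - y2)^2 = d^2"
    using B by simp_all
  define lam where "lam = ((x1-y1)*(y1-a) + (x2-y2)*(y2-b)) / n"
  have i1: "(x1 - y1) * n = ((x1-y1)*(y1-a) + (x2-y2)*(y2-b)) * (y1-a) + (y2-b) * ((y2 - b) * (x1 - y1) - (y1 - a) * (x2 - y2))"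
    by (simp add: n_def power2_eq_square algebra_simps)
  have i2: "(x2 - y2) * n = ((x1-y1)*(y1-a) + (x2-y2)*(y2-b)) * (y2-b) - (y1-a) * ((y2 - b) * (x1 - y1) - (y1 - a) * (x2 - y2))"
    by (simp add: n_def power2_eq_square algebra_simps)
  define S where "S = (x1-y1)*(y1-a) + (x2-y2)*(y2-b)"
  have h1: "(x1 - y1) * n = S * (y1-a)" using i1 det unfolding S_def by simp
  have h2: "(x2 - y2) * n = S * (y2-b)" using i2 det unfolding S_def by simp
  have "x1 - y1 = (S * (y1-a)) / n" using h1 n0' by (simp add: eq_divide_eq)
  then have e1: "x1 - y1 = lam * (y1 - a)" by (simp add: lam_def S_def)
  have "x2 - y2 = (S * (y2-b)) / n" using h2 n0' by (simp add: eq_divide_eq)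
  then have e2: "x2 - y2 = lam * (y2 - b)" by (simp add: lam_def S_def)
  have "d^2 = (lam*(y1-a))^2 + (lam*(y2-b))^2" using dd unfolding e1 e2 by simp
  also have "\<dots> = lam^2 * n" by (simp only: n_def power_mult_distrib distrib_left)
  finally have "lam^2 * n = d^2" by simp
  moreover have "x1 - a = (1+lam)*(y1-a)" "x2 - b = (1+lam)*(y2-b)" using e1 e2 by (simp_all add: algebra_simps)
  ultimately show "\<exists>lam. x1 - a = (1+lam)*(y1-a) \<and> x2 - b = (1+lam)*(y2-b) \<and> lam^2 * ((y1-a)^2+(y2-b)^2) = d^2"
    by (auto simp: n_def)
qed

lemma X_not_A_NN:
  assumes "((x1,x2),(y1,y2),w) \<in> conchoid_B f a b d" "(x1, x2) \<noteq> (a, b)"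
  shows "NN a b (x1, x2) \<noteq> (0::'a::field)"
proof -
  obtain lam where l: "x1 - a = (1+lam)*(y1-a)" "x2 - b = (1+lam)*(y2-b)"
    using B_struct(3)[OF assms(1)] by blast
  have n0: "(y1-a)^2+(y2-b)^2 \<noteq> 0" using B_struct(2)[OF assms(1)] .
  have "1 + lam \<noteq> 0" using l assms(2) by auto
  moreover have "NN a b (x1, x2) = (1+lam)^2 * ((y1-a)^2+(y2-b)^2)"
  proof -
    have "NN a b (x1,x2) = (x1-a)^2 + (x2-b)^2" by (simp add: NN_def)
    also have "\<dots> = ((1+lam)*(y1-a))^2 + ((1+lam)*(y2-b))^2" using l by simp
    also have "\<dots> = (1+lam)^2 * ((y1-a)^2+(y2-b)^2)" by (simp only: power_mult_distrib distrib_left)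
    finally show ?thesis .
  qed
  ultimately show ?thesis using n0 by simp
qed

lemma YY_eq:
  assumes "x1 - a = k*(y1-a)" "x2 - b = k*(y2-b)" "k*(1 + d/s) = (1::'a::field)"
  shows "YY a b d (x1,x2) s = (y1,y2)"
proof -
  have "(x1-a)*(1+d/s) = (y1-a)*(k*(1+d/s))" "(x2-b)*(1+d/s) = (y2-b)*(k*(1+d/s))"
    unfolding assms(1,2) by (simp_all only: ac_simps)
  then show ?thesis unfolding YY_def using assms(3) by simp
qed

lemma fiber_Y:
  assumes B: "((x1,x2),(y1,y2),w) \<in> conchoid_B f a b d" and t: "\<tau> \<noteq> 0" "\<tau>^2 = NN a b (x1,x2)"
  shows "(y1,y2) = YY a b d (x1,x2) \<tau> \<or> (y1,y2) = YY a b d (x1,x2) (-\<tau>)"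
proof -
  define n where "n = (y1-a)^2+(y2-b)^2"
  obtain lam where l: "x1 - a = (1+lam)*(y1-a)" "x2 - b = (1+lam)*(y2-b)" "lam^2 * n = d^2"
    using B_struct(3)[OF B] unfolding n_def by blast
  have tn: "\<tau>^2 = (1+lam)^2 * n"
    using t(2) l(1,2) by (simp add: NN_def n_def power2_eq_square algebra_simps)
  have "(lam*\<tau>)^2 = lam^2 * \<tau>^2" by (simp add: power_mult_distrib)
  also have "\<dots> = (1+lam)^2 * (lam^2 * n)" using tn by (simp add: ac_simps)
  also have "\<dots> = (d*(1+lam))^2" using l(3) by (simp add: power_mult_distrib ac_simps)
  finally have "(lam*\<tau>)^2 = (d*(1+lam))^2" .
  then have "lam*\<tau> = d*(1+lam) \<or> lam*\<tau> = - (d*(1+lam))" using sq_eq_sq by blast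
  then show ?thesis
  proof
    assume h: "lam*\<tau> = - (d*(1+lam))"
    have "(1+lam)*d = -(lam*\<tau>)" using h by (metis minus_minus mult.commute)
    then have "(1+lam)*d/\<tau> = -lam" using t(1) by simp
    then have "(1+lam)*(1 + d/\<tau>) = 1" by (simp add: distrib_left)
    then have "YY a b d (x1,x2) \<tau> = (y1,y2)" by (rule YY_eq[OF l(1,2)])
    then show ?thesis by simp
  next
    assume h: "lam*\<tau> = d*(1+lam)"
    have "(1+lam)*d = lam*\<tau>" using h by (metis mult.commute)
    then have "(1+lam)*d/\<tau> = lam" using t(1) by simp
    then have "(1+lam)*(1 + d/(-\<tau>)) = 1" by (simp add: right_diff_distrib)
    then have "YY a b d (x1,x2) (-\<tau>) = (y1,y2)" by (rule YY_eq[OF l(1,2)])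
    then show ?thesis by simp
  qed
qed

lemma B_intro0:
  assumes "eval2 f (y1,y2) = 0" "(x1-y1)^2+(x2-y2)^2 = d^2" "(y2-b)*(x1-y1) - (y1-a)*(x2-y2) = 0"
    "w*((y1-a)^2+(y2-b)^2) = 1"
  shows "((x1,x2),(y1,y2),w) \<in> conchoid_B f a b d"
  unfolding conchoid_B_def mem_Collect_eq prod.case using assms by blast

lemma B_intro:
  fixes a b d t e v1 v2 :: "'a::field"
  assumes "t \<noteq> 0" "v1^2 + v2^2 = 1" "eval2 f (a + t*v1, b + t*v2) = 0" "e^2 = d^2"
  shows "((a + (t+e)*v1, b + (t+e)*v2), (a + t*v1, b + t*v2), 1/t^2) \<in> conchoid_B f a b d"
proof (rule B_intro0)
  have q1: "a + (t+e)*v1 - (a + t*v1) = e*v1" "b + (t+e)*v2 - (b + t*v2) = e*v2"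
    "a + t*v1 - a = t*v1" "b + t*v2 - b = t*v2" by (simp_all add: algebra_simps)
  have sq: "(c*v1)^2 + (c*v2)^2 = c^2" for c
  proof -
    have "(c*v1)^2 + (c*v2)^2 = c^2 * (v1^2 + v2^2)" by (simp only: power_mult_distrib distrib_left)
    then show ?thesis using assms(2) by simp
  qed
  show "eval2 f (a + t*v1, b + t*v2) = 0" by (rule assms(3))
  show "(a + (t+e)*v1 - (a + t*v1))^2 + (b + (t+e)*v2 - (b + t*v2))^2 = d^2"
    unfolding q1 sq by (rule assms(4))
  show "(b + t*v2 - b) * (a + (t+e)*v1 - (a + t*v1)) - (a + t*v1 - a) * (b + (t+e)*v2 - (b + t*v2)) = 0"
    unfolding q1 by (simp add: algebra_simps)
  show "1/t^2 * ((a + t*v1 - a)^2 + (b + t*v2 - b)^2) = 1"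
    unfolding q1 sq using assms(1) by simp
qed

lemma fiber_mem: "(Q, y, w) \<in> conchoid_B f a b d \<Longrightarrow> y \<in> conchoid_fiber f a b d Q"
  unfolding conchoid_fiber_def by (rule image_eqI[of _ _ "(Q, y, w)"]) auto

lemma fiber_zero: "y \<in> conchoid_fiber f a b d Q \<Longrightarrow> eval2 f y = 0"
  unfolding conchoid_fiber_def conchoid_B_def by auto

lemma fiber_sub:
  assumes "\<tau> \<noteq> 0" "\<tau>^2 = NN a b Q"
  shows "conchoid_fiber f a b d Q \<subseteq> {YY a b d Q \<tau>, YY a b d Q (-\<tau>)}"
proof
  fix y assume "y \<in> conchoid_fiber f a b d Q"
  then obtain w where B: "(Q, y, w) \<in> conchoid_B f a b d" unfolding conchoid_fiber_def by auto
  obtain x1 x2 y1 y2 where Q: "Q = (x1, x2)" and y: "y = (y1, y2)" by (cases Q, cases y) auto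
  show "y \<in> {YY a b d Q \<tau>, YY a b d Q (-\<tau>)}"
    using fiber_Y[of x1 x2 y1 y2 w f a b d \<tau>] B assms unfolding Q y by auto
qed

lemma fiber_card:
  assumes B: "(Q, y, w) \<in> conchoid_B f a b d" and t: "\<tau> \<noteq> 0" "\<tau>^2 = NN a b Q"
    and c: "card (conchoid_fiber f a b d Q) \<noteq> 1"
  shows "eval2 f (YY a b d Q \<tau>) = 0 \<and> eval2 f (YY a b d Q (-\<tau>)) = 0"
proof -
  let ?F = "conchoid_fiber f a b d Q"
  have sub: "?F \<subseteq> {YY a b d Q \<tau>, YY a b d Q (-\<tau>)}" by (rule fiber_sub[OF t])
  have yF: "y \<in> ?F" by (rule fiber_mem[OF B])
  have "YY a b d Q \<tau> \<in> ?F"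
  proof (rule ccontr)
    assume "YY a b d Q \<tau> \<notin> ?F"
    then have "?F = {YY a b d Q (-\<tau>)}" using sub yF by auto
    then show False using c by simp
  qed
  moreover have "YY a b d Q (-\<tau>) \<in> ?F"
  proof (rule ccontr)
    assume "YY a b d Q (-\<tau>) \<notin> ?F"
    then have "?F = {YY a b d Q \<tau>}" using sub yF by auto
    then show False using c by simp
  qed
  ultimately show ?thesis using fiber_zero by blast
qed




lemma closed_VsetE: "zariski_closed T \<Longrightarrow> \<exists>P. T = Vset P"
  by (auto simp: zariski_closed_def Vset_def)

lemma chain_step:
  fixes a b d s0 v1 v2 :: "'a::field_char_0"
  assumes key: "\<And>x \<tau>. x \<in> (\<lambda>(x,y,w). x) ` conchoid_B f a b d \<Longrightarrow> x \<noteq> (a,b) \<Longrightarrow> \<tau> \<noteq> 0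
        \<Longrightarrow> \<tau>^2 = NN a b x \<Longrightarrow> eval2 f (YY a b d x \<tau>) = 0"
    and v: "v1^2 + v2^2 = 1" and t: "t \<noteq> 0" "t + d \<noteq> 0"
    and ft: "eval2 f (a + t*v1, b + t*v2) = 0"
  shows "eval2 f (a + (t + 2*d)*v1, b + (t + 2*d)*v2) = 0"
proof -
  define x where "x = (a + (t+d)*v1, b + (t+d)*v2)"
  have "(x, (a + t*v1, b + t*v2), 1/t^2) \<in> conchoid_B f a b d"
    unfolding x_def by (rule B_intro[OF t(1) v ft]) simp
  then have xX: "x \<in> (\<lambda>(x,y,w). x) ` conchoid_B f a b d" by force
  have NNx: "NN a b x = (t+d)^2"
  proof -
    have "NN a b x = ((t+d)*v1)^2 + ((t+d)*v2)^2" by (simp add: NN_def x_def)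
    also have "\<dots> = (t+d)^2 * (v1^2 + v2^2)" by (simp only: power_mult_distrib distrib_left)
    finally show ?thesis using v by simp
  qed
  have xA: "x \<noteq> (a,b)"
  proof
    assume "x = (a,b)"
    then have "(t+d)*v1 = 0" "(t+d)*v2 = 0" by (auto simp: x_def)
    then have "v1 = 0" "v2 = 0" using t(2) by auto
    then show False using v by simp
  qed
  have "eval2 f (YY a b d x (t+d)) = 0" by (rule key[OF xX xA t(2) NNx[symmetric]])
  moreover have "YY a b d x (t+d) = (a + (t + 2*d)*v1, b + (t + 2*d)*v2)"
  proof -
    have "(t+d)*(1 + d/(t+d)) = t + 2*d" using t(2) by (simp add: field_simps)
    then show ?thesis unfolding YY_def x_def by (simp add: mult.commute mult.left_commute)
  qed
  ultimately show ?thesis by simp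
qed

lemma forward:
  fixes f :: "'a::field_char_0 poly poly" and a b d :: 'a
  assumes alg: "algebraically_closed TYPE('a)" and irr: "irreducible f" and d0: "d \<noteq> 0"
    and y0: "y0 \<in> zero_set f" "NN a b y0 \<noteq> 0"
    and irrM: "zariski_irreducible (conchoid f a b d)"
    and nsimp: "\<not> simple_component f a b d (conchoid f a b d)"
    and irc: "irreducible_component (conchoid f a b d) (conchoid f a b d)"
  shows "is_line (zero_set f) \<and> (a, b) \<in> zero_set f"
proof -
  define M where "M = conchoid f a b d"
  define X where "X = (\<lambda>(x,y,w). x) ` conchoid_B f a b d"
  have MX: "M = zclosure X" unfolding M_def X_def conchoid_def by simp
  define X1 where "X1 = {x \<in> X. card (conchoid_fiber f a b d x) = 1}"
  have Mcl: "zariski_closed M" unfolding MX by (rule closed_zclosure)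
  have XM: "X \<subseteq> M" unfolding MX by (rule zclosure_sub)
  have Mne: "M \<noteq> {}" using irrM unfolding M_def zariski_irreducible_def by blast
  have notsub: "\<not> M \<subseteq> zclosure X1"
  proof
    assume sub: "M \<subseteq> zclosure X1"
    have "zclosure X1 \<subseteq> M" by (rule zclosure_min[OF Mcl]) (use XM in \<open>auto simp: X1_def\<close>)
    then have eq: "zclosure X1 = M" using sub by blast
    show False
    proof (cases "X1 = {}")
      case True
      then show False using eq Mne zclosure_empty by metis
    next
      case False
      have "X1 \<subseteq> M" using XM by (auto simp: X1_def)
      then have "simple_component f a b d M"
        unfolding simple_component_def using irc False eq
        by (intro conjI) (auto simp: M_def X1_def intro!: exI[of _ X1])
      then show False using nsimp M_def by simp
    qed
  qed
  obtain m where "good a b (\<lambda>x \<tau>. \<tau>^m * eval2 f (YY a b d x \<tau>))" using good_main by blast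
  then obtain P Q where PQ: "\<And>x \<tau>. \<tau> \<noteq> 0 \<Longrightarrow> \<tau>^2 = NN a b x \<Longrightarrow>
      \<tau>^m * eval2 f (YY a b d x \<tau>) = eval2 P x + \<tau> * eval2 Q x"
    unfolding good_def by blast
  define Z2 where "Z2 = {(a,b)} \<union> Vset {P, Q}"
  have Z2cl: "zariski_closed Z2" unfolding Z2_def by (rule closed_union[OF closed_point closed_V])
  have "X \<subseteq> zclosure X1 \<union> Z2"
  proof
    fix x assume xX: "x \<in> X"
    then obtain y w where B: "(x, y, w) \<in> conchoid_B f a b d" unfolding X_def by auto
    show "x \<in> zclosure X1 \<union> Z2"
    proof (cases "card (conchoid_fiber f a b d x) = 1")
      case True
      then have "x \<in> X1" using xX by (simp add: X1_def)
      then have "x \<in> zclosure X1" using zclosure_sub[of X1] by (rule subsetD[rotated])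
      then show ?thesis by simp
    next
      case False
      show ?thesis
      proof (cases "x = (a,b)")
        case True then show ?thesis by (simp add: Z2_def)
      next
        case xA: False
        obtain x1 x2 y1 y2 where xy: "x = (x1,x2)" "y = (y1,y2)" by (cases x, cases y) auto
        have "NN a b x \<noteq> 0" using X_not_A_NN[of x1 x2 y1 y2 w f a b d] B xA unfolding xy by blast
        obtain \<tau> where t2: "\<tau>^2 = NN a b x" using sqrt_exists[OF alg] by blast
        with \<open>NN a b x \<noteq> 0\<close> have t0: "\<tau> \<noteq> 0" by auto
        have z: "eval2 f (YY a b d x \<tau>) = 0 \<and> eval2 f (YY a b d x (-\<tau>)) = 0"
          by (rule fiber_card[OF B t0 t2 False])
        have e1: "eval2 P x + \<tau> * eval2 Q x = 0" using PQ[OF t0 t2] z by simp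
        have e2: "eval2 P x + (-\<tau>) * eval2 Q x = 0" using PQ[of "-\<tau>" x] t0 t2 z by simp
        have "2 * eval2 P x = (eval2 P x + \<tau> * eval2 Q x) + (eval2 P x + (-\<tau>) * eval2 Q x)"
          by (simp add: algebra_simps)
        then have "2 * eval2 P x = 0" unfolding e1 e2 by simp
        then have "eval2 P x = 0" by simp
        moreover have "eval2 Q x = 0" using e1 e2 t0 calculation by simp
        ultimately show ?thesis by (simp add: Z2_def Vset_def)
      qed
    qed
  qed
  then have "M \<subseteq> zclosure X1 \<union> Z2"
    unfolding MX by (rule zclosure_min[OF closed_union[OF closed_zclosure Z2cl]])
  then have "M \<subseteq> Z2"
    using irrM notsub closed_zclosure Z2cl unfolding M_def zariski_irreducible_def by blast
  then have XZ2: "X \<subseteq> Z2" using XM by blast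
  have key: "eval2 f (YY a b d x \<tau>) = 0"
    if "x \<in> (\<lambda>(x,y,w). x) ` conchoid_B f a b d" "x \<noteq> (a,b)" "\<tau> \<noteq> 0" "\<tau>^2 = NN a b x" for x \<tau>
  proof -
    have "x \<in> Vset {P, Q}" using that(1,2) XZ2 unfolding X_def Z2_def by auto
    then have "eval2 P x = 0" "eval2 Q x = 0" by (auto simp: Vset_def)
    then have "\<tau>^m * eval2 f (YY a b d x \<tau>) = 0" using PQ[OF that(3,4)] by simp
    then show ?thesis using that(3) by simp
  qed
  obtain c1 c2 where y0c: "y0 = (c1, c2)" by (cases y0)
  obtain s1 where s1: "s1^2 = NN a b y0" using sqrt_exists[OF alg] by blast
  with y0(2) have s10: "s1 \<noteq> 0" by auto
  obtain s0 where s0: "s0^2 = NN a b y0" "s0 \<noteq> 0" "\<And>k::nat. s0 + of_nat k * d \<noteq> 0"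
  proof (cases "\<exists>k::nat. s1 + of_nat k * d = 0")
    case False then show ?thesis using that[of s1] s1 s10 by blast
  next
    case True
    then obtain k0 :: nat where k0: "s1 + of_nat k0 * d = 0" by blast
    have "- s1 + of_nat k * d \<noteq> 0" for k :: nat
    proof
      assume "- s1 + of_nat k * d = 0"
      then have "of_nat (k0 + k) * d = 0" using k0 by (simp add: algebra_simps)
      then have "(of_nat (k0 + k) :: 'a) = 0" using d0 by (metis mult_eq_0_iff)
      then have "k0 + k = 0" by (metis of_nat_eq_0_iff)
      then show False using k0 s10 by simp
    qed
    then show ?thesis using that[of "-s1"] s1 s10 by simp
  qed
  define v1 where "v1 = (c1 - a) / s0"
  define v2 where "v2 = (c2 - b) / s0"
  have cs: "(c1-a)^2 + (c2-b)^2 = s0^2" using s0(1) unfolding y0c by (simp add: NN_def)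
  have "v1^2 + v2^2 = ((c1-a)^2 + (c2-b)^2) / s0^2"
    unfolding v1_def v2_def by (simp add: power_divide add_divide_distrib)
  then have v: "v1^2 + v2^2 = 1" using s0(2) unfolding cs by simp
  have y0v: "y0 = (a + s0*v1, b + s0*v2)" using s0(2) unfolding y0c v1_def v2_def by simp
  have chain: "eval2 f (a + (s0 + of_nat (2*k) * d)*v1, b + (s0 + of_nat (2*k) * d)*v2) = 0" for k :: nat
  proof (induction k)
    case 0 then show ?case using y0(1) y0v by (simp add: zero_set_def)
  next
    case (Suc k)
    have t0: "s0 + of_nat (2*k) * d \<noteq> 0" by (rule s0(3))
    have t1: "s0 + of_nat (2*k) * d + d \<noteq> 0" using s0(3)[of "2*k+1"] by (simp add: algebra_simps)
    have st: "eval2 f (a + (s0 + of_nat (2*k) * d + 2*d)*v1, b + (s0 + of_nat (2*k) * d + 2*d)*v2) = 0"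
      by (rule chain_step[OF key v t0 t1 Suc.IH])
    have eq: "s0 + of_nat (2*k) * d + 2*d = s0 + of_nat (2*Suc k) * d" by (simp add: algebra_simps)
    show ?case using st unfolding eq .
  qed
  obtain h where h: "\<And>t. eval2 f (a + t * v1, b + t * v2) = poly h t" using eval2_line by blast
  have "h = 0"
  proof (rule ccontr)
    assume "h \<noteq> 0"
    then have fin: "finite {t. poly h t = 0}" by (rule poly_roots_finite)
    have "range (\<lambda>k::nat. s0 + of_nat (2*k) * d) \<subseteq> {t. poly h t = 0}"
      using chain h by auto
    moreover have "inj (\<lambda>k::nat. s0 + of_nat (2*k) * d)"
      by (rule injI) (use d0 in simp)
    ultimately have "finite (range (\<lambda>k::nat. s0 + of_nat (2*k) * d))" using fin finite_subset by blast
    then show False using \<open>inj _\<close> finite_imageD by (metis infinite_UNIV_nat)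
  qed
  then have online: "eval2 f (a + t * v1, b + t * v2) = 0" for t using h by simp
  have van: "eval2 f (y1, y2) = 0" if "v2 * y1 + (- v1) * y2 + (v1 * b - v2 * a) = 0" for y1 y2
  proof -
    define t where "t = (y1 - a) * v1 + (y2 - b) * v2"
    have det: "v2 * (y1 - a) = v1 * (y2 - b)" using that by (simp add: algebra_simps)
    have "t * v1 = (y1-a)*v1*v1 + v2*(v1*(y2-b))" unfolding t_def by (simp add: algebra_simps)
    also have "\<dots> = (y1-a)*v1*v1 + v2*(v2*(y1-a))" using det by simp
    also have "\<dots> = (y1 - a) * (v1^2 + v2^2)" by (simp add: power2_eq_square algebra_simps)
    finally have "t * v1 = (y1 - a) * (v1^2 + v2^2)" .
    then have e1: "a + t * v1 = y1" using v by simp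
    have "t * v2 = v1*(v2*(y1-a)) + (y2-b)*v2*v2" unfolding t_def by (simp add: algebra_simps)
    also have "\<dots> = v1*(v1*(y2-b)) + (y2-b)*v2*v2" using det by simp
    also have "\<dots> = (y2 - b) * (v1^2 + v2^2)" by (simp add: power2_eq_square algebra_simps)
    finally have "t * v2 = (y2 - b) * (v1^2 + v2^2)" .
    then have e2: "b + t * v2 = y2" using v by simp
    show ?thesis using online[of t] e1 e2 by simp
  qed
  have ab: "(v2, - v1) \<noteq> (0, 0)" using v by auto
  have zs: "zero_set f = {(y1, y2). v2 * y1 + (- v1) * y2 + (v1 * b - v2 * a) = 0}"
    by (rule line_factor[OF irr ab van])
  have "is_line (zero_set f)"
    unfolding is_line_def using zs ab by blast
  moreover have "(a, b) \<in> zero_set f" unfolding zs by (simp add: algebra_simps)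
  ultimately show ?thesis by blast
qed




lemma backward:
  fixes f :: "'a::field_char_0 poly poly" and a b d :: 'a
  assumes alg: "algebraically_closed TYPE('a)" and d0: "d \<noteq> 0"
    and y0: "y0 \<in> zero_set f" "NN a b y0 \<noteq> 0"
    and zs: "zero_set f = {(y1, y2). \<alpha> * y1 + \<beta> * y2 + \<gamma> = 0}" and ab: "(\<alpha>, \<beta>) \<noteq> (0, 0)"
    and A: "(a, b) \<in> zero_set f"
  shows "zariski_irreducible (conchoid f a b d) \<and> special_component f a b d (conchoid f a b d)"
proof -
  obtain c1 c2 where y0c: "y0 = (c1, c2)" by (cases y0)
  obtain s0 where s0: "s0^2 = NN a b y0" using sqrt_exists[OF alg] by blast
  with y0(2) have s00: "s0 \<noteq> 0" by auto
  define v1 where "v1 = (c1 - a) / s0"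
  define v2 where "v2 = (c2 - b) / s0"
  have cs: "(c1-a)^2 + (c2-b)^2 = s0^2" using s0 unfolding y0c by (simp add: NN_def)
  have "v1^2 + v2^2 = ((c1-a)^2 + (c2-b)^2) / s0^2"
    unfolding v1_def v2_def by (simp add: power_divide add_divide_distrib)
  then have v: "v1^2 + v2^2 = 1" using s00 unfolding cs by simp
  have vnz: "v1 \<noteq> 0 \<or> v2 \<noteq> 0" using v by auto
  define pt where "pt t = (a + t*v1, b + t*v2)" for t
  have hA: "\<alpha> * a + \<beta> * b + \<gamma> = 0" using A zs by auto
  have hy0: "\<alpha> * c1 + \<beta> * c2 + \<gamma> = 0" using y0(1) zs y0c by auto
  have "\<alpha> * (c1-a) + \<beta> * (c2-b) = (\<alpha> * c1 + \<beta> * c2 + \<gamma>) - (\<alpha> * a + \<beta> * b + \<gamma>)"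
    by (simp add: algebra_simps)
  then have "\<alpha> * (c1-a) + \<beta> * (c2-b) = 0" using hA hy0 by simp
  then have av: "\<alpha> * v1 + \<beta> * v2 = 0" unfolding v1_def v2_def by (simp add: add_divide_distrib[symmetric] times_divide_eq_right)
  have C_eq: "zero_set f = range pt"
  proof (intro equalityI subsetI)
    fix y assume "y \<in> zero_set f"
    then obtain y1 y2 where y: "y = (y1, y2)" "\<alpha> * y1 + \<beta> * y2 + \<gamma> = 0" using zs by auto
    define u1 where "u1 = y1 - a"
    define u2 where "u2 = y2 - b"
    have "\<alpha> * u1 + \<beta> * u2 = (\<alpha> * y1 + \<beta> * y2 + \<gamma>) - (\<alpha> * a + \<beta> * b + \<gamma>)"
      unfolding u1_def u2_def by (simp add: algebra_simps)
    then have au: "\<alpha> * u1 + \<beta> * u2 = 0" using y(2) hA by simp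
    have "\<alpha> * (u1*v2 - u2*v1) = (\<alpha> * u1 + \<beta> * u2)*v2 - (\<alpha> * v1 + \<beta> * v2)*u2"
      by (simp add: algebra_simps)
    then have d1: "\<alpha> * (u1*v2 - u2*v1) = 0" using au av by simp
    have "\<beta> * (u1*v2 - u2*v1) = (\<alpha> * v1 + \<beta> * v2)*u1 - (\<alpha> * u1 + \<beta> * u2)*v1"
      by (simp add: algebra_simps)
    then have d2: "\<beta> * (u1*v2 - u2*v1) = 0" using au av by simp
    have det: "u2 * v1 = u1 * v2" using d1 d2 ab by auto
    define t where "t = u1 * v1 + u2 * v2"
    have "t * v1 = u1*v1*v1 + v2*(u2*v1)" unfolding t_def by (simp add: algebra_simps)
    also have "\<dots> = u1*v1*v1 + v2*(u1*v2)" using det by simp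
    also have "\<dots> = u1 * (v1^2 + v2^2)" by (simp add: power2_eq_square algebra_simps)
    finally have e1: "t * v1 = u1" using v by simp
    have "t * v2 = v1*(u1*v2) + u2*v2*v2" unfolding t_def by (simp add: algebra_simps)
    also have "\<dots> = v1*(u2*v1) + u2*v2*v2" using det by simp
    also have "\<dots> = u2 * (v1^2 + v2^2)" by (simp add: power2_eq_square algebra_simps)
    finally have e2: "t * v2 = u2" using v by simp
    have "y = pt t" unfolding pt_def y(1) using e1 e2 by (simp add: u1_def u2_def)
    then show "y \<in> range pt" by blast
  next
    fix y assume "y \<in> range pt"
    then obtain t where y: "y = pt t" by blast
    have "\<alpha> * (a + t*v1) + \<beta> * (b + t*v2) + \<gamma> = (\<alpha> * a + \<beta> * b + \<gamma>) + t * (\<alpha> * v1 + \<beta> * v2)"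
      by (simp add: algebra_simps)
    then have "\<alpha> * (a + t*v1) + \<beta> * (b + t*v2) + \<gamma> = 0" using hA av by simp
    then show "y \<in> zero_set f" unfolding zs y pt_def by simp
  qed
  have fz: "eval2 f (a + t*v1, b + t*v2) = 0" for t
    using C_eq unfolding zero_set_def pt_def by blast
  have pt_inj: "s = t" if "pt s = pt t" for s t
  proof -
    have "(s - t) * v1 = 0" "(s - t) * v2 = 0" using that by (auto simp: pt_def algebra_simps)
    then show ?thesis using vnz by auto
  qed
  define X where "X = (\<lambda>(x,y,w). x) ` conchoid_B f a b d"
  have inB: "(pt s, pt t, 1/t^2) \<in> conchoid_B f a b d" if "t \<noteq> 0" "s = t + e" "e^2 = d^2" for s t e
    using B_intro[OF that(1) v fz that(3)] unfolding pt_def that(2) .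
  have X_eq: "X = range pt"
  proof (intro equalityI subsetI)
    fix x assume "x \<in> X"
    then obtain y w where B: "(x, y, w) \<in> conchoid_B f a b d" unfolding X_def by auto
    obtain x1 x2 y1 y2 where xy: "x = (x1, x2)" "y = (y1, y2)" by (cases x, cases y) auto
    have "y \<in> zero_set f" using B_struct(1)[of x1 x2 y1 y2 w f a b d] B xy by (simp add: zero_set_def)
    then obtain t where yt: "y = pt t" using C_eq by auto
    obtain lam where l: "x1 - a = (1+lam)*(y1-a)" "x2 - b = (1+lam)*(y2-b)"
      using B_struct(3)[of x1 x2 y1 y2 w f a b d] B xy by auto
    have "y1 - a = t * v1" "y2 - b = t * v2" using yt xy by (auto simp: pt_def)
    then have "x = pt ((1+lam)*t)" using l xy unfolding pt_def by (simp add: algebra_simps)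
    then show "x \<in> range pt" by blast
  next
    fix x assume "x \<in> range pt"
    then obtain s where x: "x = pt s" by blast
    show "x \<in> X"
    proof (cases "s = d")
      case False
      have "(pt s, pt (s - d), 1/(s-d)^2) \<in> conchoid_B f a b d"
        by (rule inB) (use False in auto)
      then show ?thesis unfolding X_def x by force
    next
      case True
      have "(pt s, pt (2*d), 1/(2*d)^2) \<in> conchoid_B f a b d"
        by (rule inB[where e="-d"]) (use True d0 in auto)
      then show ?thesis unfolding X_def x by force
    qed
  qed
  have M_eq: "conchoid f a b d = range pt"
    unfolding conchoid_def X_def[symmetric] X_eq C_eq[symmetric] by (rule zclosure_closed[OF closed_zero_set])
  have irr: "zariski_irreducible (range pt)"
    unfolding zariski_irreducible_def
  proof (intro conjI allI impI)
    show "zariski_closed (range pt)" unfolding C_eq[symmetric] by (rule closed_zero_set)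
    show "range pt \<noteq> {}" by simp
    fix T1 T2 assume T: "zariski_closed T1 \<and> zariski_closed T2 \<and> range pt \<subseteq> T1 \<union> T2"
    obtain P1 where P1: "T1 = Vset P1" using T closed_VsetE by blast
    obtain P2 where P2: "T2 = Vset P2" using T closed_VsetE by blast
    show "range pt \<subseteq> T1 \<or> range pt \<subseteq> T2"
    proof (rule ccontr)
      assume "\<not> (range pt \<subseteq> T1 \<or> range pt \<subseteq> T2)"
      then obtain t1 t2 where "pt t1 \<notin> T1" "pt t2 \<notin> T2" by blast
      then obtain g1 g2 where g1: "g1 \<in> P1" "eval2 g1 (pt t1) \<noteq> 0" and g2: "g2 \<in> P2" "eval2 g2 (pt t2) \<noteq> 0"
        unfolding P1 P2 Vset_def by blast
      obtain h1 where h1: "\<And>t. eval2 g1 (a + t * v1, b + t * v2) = poly h1 t" using eval2_line by blast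
      obtain h2 where h2: "\<And>t. eval2 g2 (a + t * v1, b + t * v2) = poly h2 t" using eval2_line by blast
      have "poly (h1 * h2) t = 0" for t
      proof -
        have "pt t \<in> T1 \<union> T2" using T by blast
        then have "eval2 g1 (pt t) = 0 \<or> eval2 g2 (pt t) = 0" using g1 g2 unfolding P1 P2 Vset_def by blast
        then show ?thesis using h1 h2 unfolding pt_def by auto
      qed
      then have "h1 * h2 = 0" using poly_all_0_iff_0 by blast
      then have "h1 = 0 \<or> h2 = 0" by simp
      then show False using g1 g2 h1 h2 unfolding pt_def by auto
    qed
  qed
  have irc: "irreducible_component (range pt) (range pt)"
    unfolding irreducible_component_def using irr by blast
  have nsimp: "\<not> simple_component f a b d (range pt)"
  proof
    assume "simple_component f a b d (range pt)"
    then obtain \<Omega> where \<Omega>: "\<Omega> \<noteq> {}" "\<Omega> \<subseteq> range pt" "zclosure \<Omega> = range pt"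
      "\<forall>Q\<in>\<Omega>. card (conchoid_fiber f a b d Q) = 1"
      unfolding simple_component_def M_eq by blast
    have "\<Omega> \<subseteq> {pt d} \<union> {pt (-d)}"
    proof
      fix Q assume Q: "Q \<in> \<Omega>"
      then obtain s where s: "Q = pt s" using \<Omega>(2) by blast
      show "Q \<in> {pt d} \<union> {pt (-d)}"
      proof (rule ccontr)
        assume "Q \<notin> {pt d} \<union> {pt (-d)}"
        then have sd: "s \<noteq> d" "s \<noteq> -d" using s by auto
        have "(pt s, pt (s - d), 1/(s-d)^2) \<in> conchoid_B f a b d"
          by (rule inB) (use sd in auto)
        then have m1: "pt (s - d) \<in> conchoid_fiber f a b d Q" using s fiber_mem by blast
        have "(pt s, pt (s + d), 1/(s+d)^2) \<in> conchoid_B f a b d"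
          by (rule inB[where e="-d"]) (use sd in \<open>auto simp: add_eq_0_iff\<close>)
        then have m2: "pt (s + d) \<in> conchoid_fiber f a b d Q" using s fiber_mem by blast
        obtain z where "conchoid_fiber f a b d Q = {z}" using \<Omega>(4) Q card_1_singletonE by blast
        then have "pt (s - d) = pt (s + d)" using m1 m2 by (metis singletonD)
        then have "s - d = s + d" by (rule pt_inj)
        then show False using d0 by simp
      qed
    qed
    moreover have cl: "zariski_closed ({pt d} \<union> {pt (-d)})"
      by (rule closed_union) (simp_all only: pt_def closed_point)
    ultimately have "zclosure \<Omega> \<subseteq> {pt d} \<union> {pt (-d)}"
      using zclosure_min by blast
    then have "pt 0 \<in> {pt d} \<union> {pt (-d)}" using \<Omega>(3) by blast
    then have "0 = d \<or> 0 = -d" using pt_inj by blast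
    then show False using d0 by simp
  qed
  show ?thesis
    unfolding M_eq special_component_def using irr irc nsimp by blast
qed


theorem corollary2:
  fixes f :: "'a::field_char_0 poly poly"
    and a b d :: 'a
  assumes "algebraically_closed TYPE('a)"
    and "irreducible f"
    and "d \<noteq> 0"
    and "{p \<in> zero_set f. (fst p - a)^2 + (snd p - b)^2 \<noteq> 0} \<noteq> {}"
    and "\<not> is_circle_centered (zero_set f) (a, b)"
  shows "(zariski_irreducible (conchoid f a b d) \<and> special_component f a b d (conchoid f a b d))
         \<longleftrightarrow> (is_line (zero_set f) \<and> (a, b) \<in> zero_set f)"
proof -
  from assms(4) obtain y0 where y0: "y0 \<in> zero_set f" "(fst y0 - a)^2 + (snd y0 - b)^2 \<noteq> 0" by blast
  have NN0: "NN a b y0 \<noteq> 0" using y0(2) by (simp add: NN_def)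
  show ?thesis
  proof
    assume H: "zariski_irreducible (conchoid f a b d) \<and> special_component f a b d (conchoid f a b d)"
    then have "irreducible_component (conchoid f a b d) (conchoid f a b d)"
      "\<not> simple_component f a b d (conchoid f a b d)"
      unfolding special_component_def by blast+
    then show "is_line (zero_set f) \<and> (a, b) \<in> zero_set f"
      using forward[OF assms(1,2,3) y0(1) NN0] H by blast
  next
    assume H: "is_line (zero_set f) \<and> (a, b) \<in> zero_set f"
    then obtain \<alpha> \<beta> \<gamma> where l: "(\<alpha>, \<beta>) \<noteq> (0, 0)" "zero_set f = {(y1, y2). \<alpha> * y1 + \<beta> * y2 + \<gamma> = 0}"
      unfolding is_line_def by blast
    show "zariski_irreducible (conchoid f a b d) \<and> special_component f a b d (conchoid f a b d)"
      by (rule backward[OF assms(1,3) y0(1) NN0 l(2) l(1)]) (use H in blast)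
  qed
qed

end
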